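(* Let $Q=(q_1,\dots,q_n)$ with $q_i\in\mathbb C\setminus\{0,1\}$ and $\Lambda=(\lambda_{ij})$ an $n\times n$ matrix over $\mathbb C\setminus\{0\}$ with $\lambda_{ii}=1$, $\lambda_{ij}=\lambda_{ji}^{-1}$, such that the group $G(Q,\Lambda)\subseteq\mathbb C^\times$ generated by all $q_i,\lambda_{ij}$ is torsion free; let $\eta_1,\dots,\eta_r$ be a basis of it, $\{\mu_1,\dots,\mu_r\}\subset\mathbb C$ a $\mathbb Q$-linearly independent set, and $d:G(Q,\Lambda)\to\mathbb C$ the homomorphism $d(\eta_1^{s_1}\cdots\eta_r^{s_r})=\sum_i s_i\mu_i$. Let $A_q$ be the $\mathbb C$-algebra generated by $y_1,x_1,\dots,y_n,x_n$ with relations, for $i<j$: $y_jy_i=\lambda_{ji}y_iy_j$, $y_jx_i=\lambda_{ij}x_iy_j$, $x_jy_i=q_i\lambda_{ij}y_ix_j$, $x_jx_i=q_i^{-1}\lambda_{ij}^{-1}x_ix_j$, and for all $i$: $x_iy_i-q_iy_ix_i=(q_i-1)(1+\sum_{k<i}y_kx_k)$. Let $A_1$ be the Poisson algebra $\mathbb C[y_1,x_1,\dots,y_n,x_n]$ with bracket, for $i<j$: $\{y_j,y_i\}=d(\lambda_{ji})y_iy_j$, $\{y_j,x_i\}=d(\lambda_{ij})x_iy_j$, $\{x_j,y_i\}=(d(q_i)+d(\lambda_{ij}))y_ix_j$, $\{x_j,x_i\}=-(d(q_i)+d(\lambda_{ij}))x_ix_j$, and for all $i$: $\{x_i,y_i\}=d(q_i)(1+\sum_{k\le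 i}y_kx_k)$. In both algebras put $z_i=1+\sum_{k=1}^iy_kx_k$ and $\mathcal M_n=\{z_1,z_2,y_2,x_2,z_3,y_3,x_3,\dots,z_n,y_n,x_n\}$. Call $T\subseteq\mathcal M_n$ admissible if for every $2\le i\le n$: ($y_i\in T$ or $x_i\in T$) if and only if ($z_i\in T$ and $z_{i-1}\in T$). Then: (1) for every prime ideal $P$ of $A_q$, $P\cap\mathcal M_n$ is admissible; (2) for every Poisson prime ideal $P$ of $A_1$, $P\cap\mathcal M_n$ is admissible.
   Context: A Poisson ideal $P$ of $A_1$ is an ideal with $\{P,A_1\}\subseteq P$; it is Poisson prime if for Poisson ideals $I,J$, $IJ\subseteq P$ implies $I\subseteq P$ or $J\subseteq P$. ($A_1$ coincides with the semiclassical limit $A/(t-1)A$ of a one-parameter deformation whose specialization is $A_q$.) *)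

theory Defs
  imports Complex_Main "HOL-Library.Poly_Mapping"
begin

datatype var = Y nat | X nat

fun vidx :: "var \<Rightarrow> nat" where
  "vidx (Y i) = i" | "vidx (X i) = i"

definition Vars :: "nat \<Rightarrow> var set" where
  "Vars n = Y ` {1..n} \<union> X ` {1..n}"

section \<open>The free associative algebra C<y_1,x_1,...,y_n,x_n>\<close>

type_synonym ncpoly = "var list \<Rightarrow>\<^sub>0 complex"

definition ncR :: "nat \<Rightarrow> ncpoly set" where
  "ncR n = {f. \<forall>w\<in>Poly_Mapping.keys f. \<forall>v\<in>set w. vidx v \<in> {1..n}}"

definition fmul :: "ncpoly \<Rightarrow> ncpoly \<Rightarrow> ncpoly" where
  "fmul f g = (\<Sum>u\<in>Poly_Mapping.keys f. \<Sum>v\<in>Poly_Mapping.keys g. Poly_Mapping.single (u @ v) (Poly_Mapping.lookup f u * Poly_Mapping.lookup g v))"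

definition ncgen :: "var \<Rightarrow> ncpoly" where
  "ncgen v = Poly_Mapping.single [v] 1"

definition ncconst :: "complex \<Rightarrow> ncpoly" where
  "ncconst c = Poly_Mapping.single [] c"

definition ncz :: "nat \<Rightarrow> ncpoly" where
  "ncz i = ncconst 1 + (\<Sum>k\<in>{1..i}. fmul (ncgen (Y k)) (ncgen (X k)))"

text \<open>Defining relators of A_q (left side minus right side).\<close>
definition Aq_rels :: "nat \<Rightarrow> (nat \<Rightarrow> complex) \<Rightarrow> (nat \<Rightarrow> nat \<Rightarrow> complex) \<Rightarrow> ncpoly set" where
  "Aq_rels n q lam =
     {fmul (ncgen (Y j)) (ncgen (Y i)) - fmul (ncconst (lam j i)) (fmul (ncgen (Y i)) (ncgen (Y j)))
        | i j. 1 \<le> i \<and> i < j \<and> j \<le> n}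
   \<union> {fmul (ncgen (Y j)) (ncgen (X i)) - fmul (ncconst (lam i j)) (fmul (ncgen (X i)) (ncgen (Y j)))
        | i j. 1 \<le> i \<and> i < j \<and> j \<le> n}
   \<union> {fmul (ncgen (X j)) (ncgen (Y i)) - fmul (ncconst (q i * lam i j)) (fmul (ncgen (Y i)) (ncgen (X j)))
        | i j. 1 \<le> i \<and> i < j \<and> j \<le> n}
   \<union> {fmul (ncgen (X j)) (ncgen (X i))
          - fmul (ncconst (inverse (q i) * inverse (lam i j))) (fmul (ncgen (X i)) (ncgen (X j)))
        | i j. 1 \<le> i \<and> i < j \<and> j \<le> n}
   \<union> {fmul (ncgen (X i)) (ncgen (Y i)) - fmul (ncconst (q i)) (fmul (ncgen (Y i)) (ncgen (X i)))
          - fmul (ncconst (q i - 1))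
              (ncconst 1 + (\<Sum>k\<in>{1..<i}. fmul (ncgen (Y k)) (ncgen (X k))))
        | i. 1 \<le> i \<and> i \<le> n}"

definition nc_ideal :: "nat \<Rightarrow> ncpoly set \<Rightarrow> bool" where
  "nc_ideal n I \<longleftrightarrow> I \<subseteq> ncR n \<and> 0 \<in> I \<and> (\<forall>a\<in>I. \<forall>b\<in>I. a + b \<in> I) \<and> (\<forall>a\<in>I. - a \<in> I)
     \<and> (\<forall>r\<in>ncR n. \<forall>a\<in>I. fmul r a \<in> I \<and> fmul a r \<in> I)"

text \<open>Prime ideals of A_q = (free algebra)/(relators), described via the
  correspondence between ideals of A_q and ideals of the free algebra that
  contain the relators: P/K is prime in A_q.\<close>
definition Aq_prime :: "nat \<Rightarrow> (nat \<Rightarrow> complex) \<Rightarrow> (nat \<Rightarrow> nat \<Rightarrow> complex) \<Rightarrow> ncpoly set \<Rightarrow> bool" where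
  "Aq_prime n q lam P \<longleftrightarrow>
     nc_ideal n P \<and> Aq_rels n q lam \<subseteq> P \<and> P \<noteq> ncR n \<and>
     (\<forall>I J. nc_ideal n I \<and> Aq_rels n q lam \<subseteq> I \<and> nc_ideal n J \<and> Aq_rels n q lam \<subseteq> J \<longrightarrow>
        (\<forall>a\<in>I. \<forall>b\<in>J. fmul a b \<in> P) \<longrightarrow> I \<subseteq> P \<or> J \<subseteq> P)"

section \<open>The commutative polynomial ring C[y_1,x_1,...,y_n,x_n] with Poisson bracket\<close>

type_synonym cpoly = "(var \<Rightarrow>\<^sub>0 nat) \<Rightarrow>\<^sub>0 complex"

definition cR :: "nat \<Rightarrow> cpoly set" where
  "cR n = {f. \<forall>m\<in>Poly_Mapping.keys f. \<forall>v\<in>Poly_Mapping.keys m. vidx v \<in> {1..n}}"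

definition cvar :: "var \<Rightarrow> cpoly" where
  "cvar v = Poly_Mapping.single (Poly_Mapping.single v 1) 1"

definition cconst :: "complex \<Rightarrow> cpoly" where
  "cconst c = Poly_Mapping.single 0 c"

definition pd :: "var \<Rightarrow> cpoly \<Rightarrow> cpoly" where
  "pd v f = (\<Sum>m\<in>Poly_Mapping.keys f. Poly_Mapping.single (m - Poly_Mapping.single v 1)
                              (Poly_Mapping.lookup f m * of_nat (Poly_Mapping.lookup m v)))"

definition cz :: "nat \<Rightarrow> cpoly" where
  "cz i = 1 + (\<Sum>k\<in>{1..i}. cvar (Y k) * cvar (X k))"

text \<open>Brackets of generators {a,b} in A_1 (extended by antisymmetry).\<close>
fun gb :: "(nat \<Rightarrow> complex) \<Rightarrow> (nat \<Rightarrow> nat \<Rightarrow> complex) \<Rightarrow> (complex \<Rightarrow> complex)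
           \<Rightarrow> var \<Rightarrow> var \<Rightarrow> cpoly" where
  "gb q lam d (Y j) (Y i) =
     (if i < j then cconst (d (lam j i)) * cvar (Y i) * cvar (Y j)
      else if j < i then - (cconst (d (lam i j)) * cvar (Y j) * cvar (Y i))
      else 0)"
| "gb q lam d (Y j) (X i) =
     (if i < j then cconst (d (lam i j)) * cvar (X i) * cvar (Y j)
      else if j < i then - (cconst (d (q j) + d (lam j i)) * cvar (Y j) * cvar (X i))
      else - (cconst (d (q i)) * (1 + (\<Sum>k\<in>{1..i}. cvar (Y k) * cvar (X k)))))"
| "gb q lam d (X j) (Y i) =
     (if i < j then cconst (d (q i) + d (lam i j)) * cvar (Y i) * cvar (X j)
      else if j < i then - (cconst (d (lam j i)) * cvar (X j) * cvar (Y i))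
      else cconst (d (q i)) * (1 + (\<Sum>k\<in>{1..i}. cvar (Y k) * cvar (X k))))"
| "gb q lam d (X j) (X i) =
     (if i < j then - (cconst (d (q i) + d (lam i j)) * cvar (X i) * cvar (X j))
      else if j < i then cconst (d (q j) + d (lam j i)) * cvar (X j) * cvar (X i)
      else 0)"

text \<open>The Poisson bracket: the unique biderivation with the given values on generators.\<close>
definition pbr :: "nat \<Rightarrow> (nat \<Rightarrow> complex) \<Rightarrow> (nat \<Rightarrow> nat \<Rightarrow> complex) \<Rightarrow> (complex \<Rightarrow> complex)
                   \<Rightarrow> cpoly \<Rightarrow> cpoly \<Rightarrow> cpoly" where
  "pbr n q lam d f g = (\<Sum>a\<in>Vars n. \<Sum>b\<in>Vars n. pd a f * pd b g * gb q lam d a b)"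

definition c_ideal :: "nat \<Rightarrow> cpoly set \<Rightarrow> bool" where
  "c_ideal n I \<longleftrightarrow> I \<subseteq> cR n \<and> 0 \<in> I \<and> (\<forall>a\<in>I. \<forall>b\<in>I. a + b \<in> I) \<and> (\<forall>a\<in>I. - a \<in> I)
     \<and> (\<forall>r\<in>cR n. \<forall>a\<in>I. r * a \<in> I)"

definition poisson_ideal :: "nat \<Rightarrow> (nat \<Rightarrow> complex) \<Rightarrow> (nat \<Rightarrow> nat \<Rightarrow> complex) \<Rightarrow> (complex \<Rightarrow> complex)
                             \<Rightarrow> cpoly set \<Rightarrow> bool" where
  "poisson_ideal n q lam d I \<longleftrightarrow> c_ideal n I \<and> (\<forall>a\<in>I. \<forall>f\<in>cR n. pbr n q lam d a f \<in> I)"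

definition poisson_prime :: "nat \<Rightarrow> (nat \<Rightarrow> complex) \<Rightarrow> (nat \<Rightarrow> nat \<Rightarrow> complex) \<Rightarrow> (complex \<Rightarrow> complex)
                             \<Rightarrow> cpoly set \<Rightarrow> bool" where
  "poisson_prime n q lam d P \<longleftrightarrow> poisson_ideal n q lam d P \<and>
     (\<forall>I J. poisson_ideal n q lam d I \<and> poisson_ideal n q lam d J \<longrightarrow>
        (\<forall>a\<in>I. \<forall>b\<in>J. a * b \<in> P) \<longrightarrow> I \<subseteq> P \<or> J \<subseteq> P)"

datatype mel = MZ nat | MY nat | MX nat

definition Mn :: "nat \<Rightarrow> mel set" where
  "Mn n = {MZ 1} \<union> MZ ` {2..n} \<union> MY ` {2..n} \<union> MX ` {2..n}"

definition admissible :: "nat \<Rightarrow> mel set \<Rightarrow> bool" where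
  "admissible n T \<longleftrightarrow> T \<subseteq> Mn n \<and>
     (\<forall>i\<in>{2..n}. (MY i \<in> T \<or> MX i \<in> T) \<longleftrightarrow> (MZ i \<in> T \<and> MZ (i - 1) \<in> T))"

fun ncelem :: "mel \<Rightarrow> ncpoly" where
  "ncelem (MZ i) = ncz i" | "ncelem (MY i) = ncgen (Y i)" | "ncelem (MX i) = ncgen (X i)"

fun celem :: "mel \<Rightarrow> cpoly" where
  "celem (MZ i) = cz i" | "celem (MY i) = cvar (Y i)" | "celem (MX i) = cvar (X i)"

text \<open>P \<inter> M_n, viewing M_n as a set of elements of the algebra.\<close>
definition nc_trace :: "nat \<Rightarrow> ncpoly set \<Rightarrow> mel set" where
  "nc_trace n P = {m \<in> Mn n. ncelem m \<in> P}"

definition c_trace :: "nat \<Rightarrow> cpoly set \<Rightarrow> mel set" where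
  "c_trace n P = {m \<in> Mn n. celem m \<in> P}"

inductive_set grp_gen :: "complex set \<Rightarrow> complex set" for S where
  gen: "s \<in> S \<Longrightarrow> s \<in> grp_gen S"
| one: "1 \<in> grp_gen S"
| mult: "a \<in> grp_gen S \<Longrightarrow> b \<in> grp_gen S \<Longrightarrow> a * b \<in> grp_gen S"
| inv: "a \<in> grp_gen S \<Longrightarrow> inverse a \<in> grp_gen S"

definition GQL :: "nat \<Rightarrow> (nat \<Rightarrow> complex) \<Rightarrow> (nat \<Rightarrow> nat \<Rightarrow> complex) \<Rightarrow> complex set" where
  "GQL n q lam = grp_gen (q ` {1..n} \<union> {lam i j | i j. i \<in> {1..n} \<and> j \<in> {1..n}})"

end

theory Submission
  imports Defs
begin


instantiation list :: (type) monoid_add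
begin
definition zero_list_def: "(0::'a list) = []"
definition plus_list_def: "(xs::'a list) + ys = xs @ ys"
instance by standard (auto simp: zero_list_def plus_list_def)
end

lemma pm_sum_singles: "(f::'a \<Rightarrow>\<^sub>0 'b::comm_monoid_add) = (\<Sum>u\<in>Poly_Mapping.keys f. Poly_Mapping.single u (Poly_Mapping.lookup f u))"
proof (rule poly_mapping_eqI)
  fix k
  show "Poly_Mapping.lookup f k = Poly_Mapping.lookup (\<Sum>u\<in>Poly_Mapping.keys f. Poly_Mapping.single u (Poly_Mapping.lookup f u)) k"
    apply (simp add: lookup_sum lookup_single when_def)
    by (metis (mono_tags, lifting) in_keys_iff)
qed

lemma fmul_eq: "fmul f g = f * g"
proof -
  have "f * g = (\<Sum>u\<in>Poly_Mapping.keys f. Poly_Mapping.single u (Poly_Mapping.lookup f u)) * (\<Sum>v\<in>Poly_Mapping.keys g. Poly_Mapping.single v (Poly_Mapping.lookup g v))"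
    using pm_sum_singles[of f] pm_sum_singles[of g] by simp
  also have "\<dots> = fmul f g"
    by (simp add: fmul_def sum_distrib_left sum_distrib_right mult_single plus_list_def sum.swap[of _ "Poly_Mapping.keys g"])
  finally show ?thesis by simp
qed

lemma ncconst_eq: "ncconst c = Poly_Mapping.single 0 c"
  by (simp add: ncconst_def zero_list_def)

lemma ncconst_mult: "ncconst a * ncconst b = ncconst (a * b)"
  by (simp add: ncconst_eq mult_single)

lemma ncconst_one: "ncconst 1 = 1"
  by (simp add: ncconst_eq)

lemma ncconst_comm: "ncconst c * (f::ncpoly) = f * ncconst c"
proof -
  have "ncconst c * f = (\<Sum>u\<in>Poly_Mapping.keys f. ncconst c * Poly_Mapping.single u (Poly_Mapping.lookup f u))"
    by (subst pm_sum_singles[of f]) (simp add: sum_distrib_left)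
  also have "\<dots> = (\<Sum>u\<in>Poly_Mapping.keys f. Poly_Mapping.single u (Poly_Mapping.lookup f u) * ncconst c)"
    by (simp add: ncconst_eq mult_single mult.commute)
  also have "\<dots> = f * ncconst c"
    by (subst (2) pm_sum_singles[of f]) (simp add: sum_distrib_right)
  finally show ?thesis .
qed

lemma ncR_mult: "f \<in> ncR n \<Longrightarrow> g \<in> ncR n \<Longrightarrow> f * g \<in> ncR n"
proof -
  assume f: "f \<in> ncR n" and g: "g \<in> ncR n"
  show ?thesis unfolding ncR_def
  proof (intro CollectI ballI)
    fix w v assume w: "w \<in> Poly_Mapping.keys (f * g)" and v: "v \<in> set w"
    from w keys_mult[of f g] obtain a b where "w = a @ b" "a \<in> Poly_Mapping.keys f" "b \<in> Poly_Mapping.keys g"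
      by (auto simp: plus_list_def)
    with v f g show "vidx v \<in> {1..n}" unfolding ncR_def by auto
  qed
qed

lemma ncR_add: "f \<in> ncR n \<Longrightarrow> g \<in> ncR n \<Longrightarrow> f + g \<in> ncR n"
  unfolding ncR_def using keys_add[of f g] by auto

lemma ncR_const: "ncconst c \<in> ncR n"
  unfolding ncR_def ncconst_def by auto

lemma ncR_one: "1 \<in> ncR n"
  using ncR_const[of 1] by (simp add: ncconst_one)

lemma ncR_gen: "vidx v \<in> {1..n} \<Longrightarrow> ncgen v \<in> ncR n"
  unfolding ncR_def ncgen_def by auto

lemma ncR_single: "\<forall>v\<in>set w. vidx v \<in> {1..n} \<Longrightarrow> Poly_Mapping.single w c \<in> ncR n"
  unfolding ncR_def by auto

lemma ideal_diff: "nc_ideal n P \<Longrightarrow> a \<in> P \<Longrightarrow> b \<in> P \<Longrightarrow> a - b \<in> P"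
  unfolding nc_ideal_def by (metis diff_conv_add_uminus)
lemma ideal_add: "nc_ideal n P \<Longrightarrow> a \<in> P \<Longrightarrow> b \<in> P \<Longrightarrow> a + b \<in> P"
  unfolding nc_ideal_def by blast
lemma ideal_lmul: "nc_ideal n P \<Longrightarrow> r \<in> ncR n \<Longrightarrow> a \<in> P \<Longrightarrow> r * a \<in> P"
  unfolding nc_ideal_def by (simp add: fmul_eq)
lemma ideal_rmul: "nc_ideal n P \<Longrightarrow> r \<in> ncR n \<Longrightarrow> a \<in> P \<Longrightarrow> a * r \<in> P"
  unfolding nc_ideal_def by (simp add: fmul_eq)
lemma ideal_sub: "nc_ideal n P \<Longrightarrow> P \<subseteq> ncR n"
  unfolding nc_ideal_def by blast
lemma ideal_zero: "nc_ideal n P \<Longrightarrow> 0 \<in> P"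
  unfolding nc_ideal_def by blast
lemma ideal_sum: "nc_ideal n P \<Longrightarrow> (\<And>x. x \<in> S \<Longrightarrow> f x \<in> P) \<Longrightarrow> sum f S \<in> P"
  by (induction S rule: infinite_finite_induct) (auto intro: ideal_zero ideal_add)

lemma ncz_split: "i \<ge> 1 \<Longrightarrow> ncz i = ncz (i - 1) + ncgen (Y i) * ncgen (X i)"
proof -
  assume "i \<ge> 1"
  then have "{1..i} = insert i {1..i-1}" by auto
  then show ?thesis using \<open>i \<ge> 1\<close> unfolding ncz_def by (simp add: fmul_eq add.assoc)
qed

lemma ncz_pred: "i \<ge> 1 \<Longrightarrow> ncz (i - 1) = ncconst 1 + (\<Sum>k\<in>{1..<i}. ncgen (Y k) * ncgen (X k))"
proof -
  assume "i \<ge> 1"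
  then have "{1..<i} = {1..i-1}" by auto
  then show ?thesis unfolding ncz_def by (simp add: fmul_eq)
qed




abbreviation "Yg k \<equiv> ncgen (Y k)"
abbreviation "Xg k \<equiv> ncgen (X k)"
abbreviation "C c \<equiv> ncconst c"

lemma rel_in: 
  assumes "Aq_prime n q lam P"
  shows rel2: "1 \<le> i \<Longrightarrow> i < j \<Longrightarrow> j \<le> n \<Longrightarrow> Yg j * Xg i - C (lam i j) * (Xg i * Yg j) \<in> P"
    and rel3: "1 \<le> i \<Longrightarrow> i < j \<Longrightarrow> j \<le> n \<Longrightarrow> Xg j * Yg i - C (q i * lam i j) * (Yg i * Xg j) \<in> P"
    and rel4: "1 \<le> i \<Longrightarrow> i < j \<Longrightarrow> j \<le> n \<Longrightarrow> Xg j * Xg i - C (inverse (q i) * inverse (lam i j)) * (Xg i * Xg j) \<in> P"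
    and rel5: "1 \<le> i \<Longrightarrow> i \<le> n \<Longrightarrow> Xg i * Yg i - C (q i) * (Yg i * Xg i) - C (q i - 1) * ncz (i - 1) \<in> P"
proof -
  have R: "Aq_rels n q lam \<subseteq> P" using assms unfolding Aq_prime_def by blast
  show "1 \<le> i \<Longrightarrow> i < j \<Longrightarrow> j \<le> n \<Longrightarrow> Yg j * Xg i - C (lam i j) * (Xg i * Yg j) \<in> P"
  proof -
    assume h: "1 \<le> i" "i < j" "j \<le> n"
    have "fmul (ncgen (Y j)) (ncgen (X i)) - fmul (ncconst (lam i j)) (fmul (ncgen (X i)) (ncgen (Y j))) \<in> Aq_rels n q lam"
      unfolding Aq_rels_def by (rule UnI1, rule UnI1, rule UnI1, rule UnI2) (use h in blast)
    then show ?thesis using R by (auto simp: fmul_eq)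
  qed
  show "1 \<le> i \<Longrightarrow> i < j \<Longrightarrow> j \<le> n \<Longrightarrow> Xg j * Yg i - C (q i * lam i j) * (Yg i * Xg j) \<in> P"
  proof -
    assume h: "1 \<le> i" "i < j" "j \<le> n"
    have "fmul (ncgen (X j)) (ncgen (Y i)) - fmul (ncconst (q i * lam i j)) (fmul (ncgen (Y i)) (ncgen (X j))) \<in> Aq_rels n q lam"
      unfolding Aq_rels_def by (rule UnI1, rule UnI1, rule UnI2) (use h in blast)
    then show ?thesis using R by (auto simp: fmul_eq)
  qed
  show "1 \<le> i \<Longrightarrow> i < j \<Longrightarrow> j \<le> n \<Longrightarrow> Xg j * Xg i - C (inverse (q i) * inverse (lam i j)) * (Xg i * Xg j) \<in> P"
  proof -
    assume h: "1 \<le> i" "i < j" "j \<le> n"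
    have "fmul (ncgen (X j)) (ncgen (X i)) - fmul (ncconst (inverse (q i) * inverse (lam i j))) (fmul (ncgen (X i)) (ncgen (X j))) \<in> Aq_rels n q lam"
      unfolding Aq_rels_def by (rule UnI1, rule UnI2) (use h in blast)
    then show ?thesis using R by (auto simp: fmul_eq)
  qed
  show "1 \<le> i \<Longrightarrow> i \<le> n \<Longrightarrow> Xg i * Yg i - C (q i) * (Yg i * Xg i) - C (q i - 1) * ncz (i - 1) \<in> P"
  proof -
    assume h: "1 \<le> i" "i \<le> n"
    have "fmul (ncgen (X i)) (ncgen (Y i)) - fmul (ncconst (q i)) (fmul (ncgen (Y i)) (ncgen (X i)))
          - fmul (ncconst (q i - 1)) (ncconst 1 + (\<Sum>k\<in>{1..<i}. fmul (ncgen (Y k)) (ncgen (X k)))) \<in> Aq_rels n q lam"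
      unfolding Aq_rels_def by (rule UnI2) (use h in blast)
    then show ?thesis unfolding ncz_pred[OF h(1)] using R by (auto simp: fmul_eq)
  qed
qed

lemma scale_out:
  assumes "nc_ideal n P" "c \<noteq> 0" "C c * a \<in> P"
  shows "a \<in> P"
proof -
  have "C (inverse c) * (C c * a) \<in> P" using assms ideal_lmul ncR_const by blast
  moreover have "C (inverse c) * (C c * a) = a"
    using assms(2) by (simp only: mult.assoc[symmetric] ncconst_mult) (simp add: ncconst_one)
  ultimately show ?thesis by simp
qed

lemma swap_rel:
  assumes "nc_ideal n P" "c \<noteq> 0" "u * v - C c * (v * u) \<in> P"
  shows "\<exists>p\<in>P. v * u = C (inverse c) * (u * v) + p"
proof -
  let ?r = "u * v - C c * (v * u)"
  have "- (C (inverse c) * ?r) \<in> P" using assms ideal_lmul ncR_const unfolding nc_ideal_def by blast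
  moreover have "v * u = C (inverse c) * (u * v) + - (C (inverse c) * ?r)"
  proof -
    have "C (inverse c) * (C c * (v * u)) = v * u"
      using assms(2) by (simp only: mult.assoc[symmetric] ncconst_mult) (simp add: ncconst_one)
    then have "C (inverse c) * ?r = C (inverse c) * (u * v) - v * u"
      by (simp only: right_diff_distrib)
    then show ?thesis by simp
  qed
  ultimately show ?thesis by blast
qed

lemma nc_part:
  assumes q_ok: "\<forall>i\<in>{1..n}. q i \<noteq> 0 \<and> q i \<noteq> 1"
    and lam_nz: "\<forall>i\<in>{1..n}. \<forall>j\<in>{1..n}. lam i j \<noteq> 0"
    and P: "Aq_prime n q lam P"
  shows "admissible n (nc_trace n P)"
proof -
  have id: "nc_ideal n P" using P unfolding Aq_prime_def by blast
  have sub: "P \<subseteq> ncR n" using ideal_sub[OF id] .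
  have main: "(Yg i \<in> P \<or> Xg i \<in> P) \<longleftrightarrow> (ncz i \<in> P \<and> ncz (i - 1) \<in> P)" if i: "i \<in> {2..n}" for i
  proof -
    have i1: "1 \<le> i" "i \<le> n" using i by auto
    have gY: "Yg i \<in> ncR n" and gX: "Xg i \<in> ncR n" using i1 by (auto intro!: ncR_gen)
    have r5: "Xg i * Yg i - C (q i) * (Yg i * Xg i) - C (q i - 1) * ncz (i - 1) \<in> P"
      using rel5[OF P i1] .
    have qi: "q i \<noteq> 0" "q i - 1 \<noteq> 0" using q_ok i1 by auto
    have zs: "ncz i = ncz (i - 1) + Yg i * Xg i" using ncz_split i1 by simp
    show ?thesis
    proof
      assume "Yg i \<in> P \<or> Xg i \<in> P"
      then have yx: "Yg i * Xg i \<in> P" and xy: "Xg i * Yg i \<in> P"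
        using id gY gX ideal_lmul ideal_rmul by blast+
      have "C (q i) * (Yg i * Xg i) \<in> P" using yx id ideal_lmul ncR_const by blast
      then have "Xg i * Yg i - C (q i) * (Yg i * Xg i) \<in> P" using xy id ideal_diff by blast
      then have "(Xg i * Yg i - C (q i) * (Yg i * Xg i)) - (Xg i * Yg i - C (q i) * (Yg i * Xg i) - C (q i - 1) * ncz (i - 1)) \<in> P"
        using r5 id ideal_diff by blast
      then have "C (q i - 1) * ncz (i - 1) \<in> P" by simp
      then have z1: "ncz (i - 1) \<in> P" using scale_out id qi by blast
      then have "ncz i \<in> P" using zs yx id ideal_add by simp
      with z1 show "ncz i \<in> P \<and> ncz (i - 1) \<in> P" by blast
    next
      assume zz: "ncz i \<in> P \<and> ncz (i - 1) \<in> P"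
      then have yx: "Yg i * Xg i \<in> P" using id ideal_diff[of n P "ncz i" "ncz (i - 1)"] zs by simp
      have a1: "C (q i) * (Yg i * Xg i) \<in> P" using yx id ideal_lmul ncR_const by blast
      have a2: "C (q i - 1) * ncz (i - 1) \<in> P" using zz id ideal_lmul ncR_const by blast
      have "(Xg i * Yg i - C (q i) * (Yg i * Xg i) - C (q i - 1) * ncz (i - 1)) + C (q i) * (Yg i * Xg i) + C (q i - 1) * ncz (i - 1) \<in> P"
        using r5 a1 a2 id ideal_add by blast
      then have xy: "Xg i * Yg i \<in> P" by simp
      text \<open>normality of x_i modulo P\<close>
      have norm: "\<exists>c. \<exists>p\<in>P. ncgen v * Xg i = C c * (Xg i * ncgen v) + p" if v: "vidx v \<in> {1..n}" for v
      proof (cases v)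
        case (Y j)
        consider "i < j" | "j < i" | "j = i" by linarith
        then show ?thesis
        proof cases
          case 1
          have "Yg j * Xg i - C (lam i j) * (Xg i * Yg j) \<in> P" using rel2[OF P] 1 i1 v Y by auto
          then have "\<exists>p\<in>P. Yg j * Xg i = C (lam i j) * (Xg i * Yg j) + p"
            by (intro bexI[of _ "Yg j * Xg i - C (lam i j) * (Xg i * Yg j)"]) auto
          then show ?thesis using Y by blast
        next
          case 2
          have r: "Xg i * Yg j - C (q j * lam j i) * (Yg j * Xg i) \<in> P" using rel3[OF P] 2 i1 v Y by auto
          have "q j * lam j i \<noteq> 0" using q_ok lam_nz v Y i1 by auto
          from swap_rel[OF id this r] show ?thesis using Y by blast
        next
          case 3
          have "Yg j * Xg i = C 0 * (Xg i * Yg j) + Yg j * Xg i" by (simp add: ncconst_eq)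
          then show ?thesis using Y 3 yx by blast
        qed
      next
        case (X j)
        consider "i < j" | "j < i" | "j = i" by linarith
        then show ?thesis
        proof cases
          case 1
          have "Xg j * Xg i - C (inverse (q i) * inverse (lam i j)) * (Xg i * Xg j) \<in> P" using rel4[OF P] 1 i1 v X by auto
          then have "\<exists>p\<in>P. Xg j * Xg i = C (inverse (q i) * inverse (lam i j)) * (Xg i * Xg j) + p"
            by (intro bexI[of _ "Xg j * Xg i - C (inverse (q i) * inverse (lam i j)) * (Xg i * Xg j)"]) auto
          then show ?thesis using X by blast
        next
          case 2
          have r: "Xg i * Xg j - C (inverse (q j) * inverse (lam j i)) * (Xg j * Xg i) \<in> P" using rel4[OF P] 2 i1 v X by auto
          have "inverse (q j) * inverse (lam j i) \<noteq> 0" using q_ok lam_nz v X i1 by auto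
          from swap_rel[OF id this r] show ?thesis using X by blast
        qed (use X ideal_zero[OF id] in \<open>auto intro!: exI[of _ 1] simp: ncconst_one\<close>)
      qed
      have word: "Yg i * Poly_Mapping.single w 1 * Xg i \<in> P" if "\<forall>v\<in>set w. vidx v \<in> {1..n}" for w
        using that
      proof (induction w rule: rev_induct)
        case Nil
        then show ?case using yx by (simp flip: zero_list_def)
      next
        case (snoc v w)
        have m: "Poly_Mapping.single (w @ [v]) (1::complex) = Poly_Mapping.single w 1 * ncgen v"
          by (simp add: ncgen_def mult_single plus_list_def)
        have "\<exists>c. \<exists>p\<in>P. ncgen v * Xg i = C c * (Xg i * ncgen v) + p"
          using norm snoc.prems by simp
        then obtain c p where p: "p \<in> P" and e: "ncgen v * Xg i = C c * (Xg i * ncgen v) + p"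
          by blast
        have Ym: "Yg i * Poly_Mapping.single w 1 \<in> ncR n"
          using gY snoc.prems by (auto intro!: ncR_mult ncR_single)
        have gv: "ncgen v \<in> ncR n" using snoc.prems by (auto intro!: ncR_gen)
        have IH: "Yg i * Poly_Mapping.single w 1 * Xg i \<in> P" using snoc by auto
        have "Yg i * Poly_Mapping.single (w @ [v]) 1 * Xg i = (Yg i * Poly_Mapping.single w 1) * (ncgen v * Xg i)"
          unfolding m by (simp only: mult.assoc)
        also have "\<dots> = (Yg i * Poly_Mapping.single w 1) * ((Xg i * ncgen v) * C c) + (Yg i * Poly_Mapping.single w 1) * p"
          unfolding e by (simp only: distrib_left ncconst_comm[of c])
        also have "\<dots> = ((Yg i * Poly_Mapping.single w 1 * Xg i) * ncgen v) * C c + (Yg i * Poly_Mapping.single w 1) * p"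
          by (simp only: mult.assoc)
        also have "\<dots> = C c * ((Yg i * Poly_Mapping.single w 1 * Xg i) * ncgen v) + (Yg i * Poly_Mapping.single w 1) * p"
          by (simp only: ncconst_comm[of c])
        finally have eq: "Yg i * Poly_Mapping.single (w @ [v]) 1 * Xg i = C c * ((Yg i * Poly_Mapping.single w 1 * Xg i) * ncgen v) + (Yg i * Poly_Mapping.single w 1) * p" .
        have t1: "(Yg i * Poly_Mapping.single w 1 * Xg i) * ncgen v \<in> P" using ideal_rmul[OF id gv IH] .
        have t2: "C c * ((Yg i * Poly_Mapping.single w 1 * Xg i) * ncgen v) \<in> P" using ideal_lmul[OF id ncR_const t1] .
        have t3: "(Yg i * Poly_Mapping.single w 1) * p \<in> P" using ideal_lmul[OF id Ym p] .
        show ?case unfolding eq using ideal_add[OF id t2 t3] .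
      qed
      have YbX: "Yg i * b * Xg i \<in> P" if b: "b \<in> ncR n" for b
      proof -
        have "Yg i * b * Xg i = (\<Sum>u\<in>Poly_Mapping.keys b. C (Poly_Mapping.lookup b u) * (Yg i * Poly_Mapping.single u 1 * Xg i))"
        proof -
          have "\<And>u. Poly_Mapping.single u (Poly_Mapping.lookup b u) = C (Poly_Mapping.lookup b u) * Poly_Mapping.single u 1"
            by (simp add: ncconst_eq mult_single)
          then have "Yg i * b * Xg i = Yg i * (\<Sum>u\<in>Poly_Mapping.keys b. C (Poly_Mapping.lookup b u) * Poly_Mapping.single u 1) * Xg i"
            by (subst pm_sum_singles[of b]) simp
          also have "\<dots> = (\<Sum>u\<in>Poly_Mapping.keys b. Yg i * (C (Poly_Mapping.lookup b u) * Poly_Mapping.single u 1) * Xg i)"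
            by (simp add: sum_distrib_left sum_distrib_right)
          also have "\<dots> = (\<Sum>u\<in>Poly_Mapping.keys b. C (Poly_Mapping.lookup b u) * (Yg i * Poly_Mapping.single u 1 * Xg i))"
          proof (intro sum.cong refl)
            fix u
            have "Yg i * (C (Poly_Mapping.lookup b u) * Poly_Mapping.single u 1) * Xg i = Yg i * (Poly_Mapping.single u 1 * C (Poly_Mapping.lookup b u)) * Xg i"
              by (simp add: ncconst_comm)
            also have "\<dots> = (Yg i * Poly_Mapping.single u 1) * (C (Poly_Mapping.lookup b u) * Xg i)"
              by (simp add: mult.assoc)
            also have "\<dots> = (Yg i * Poly_Mapping.single u 1) * (Xg i * C (Poly_Mapping.lookup b u))"
              by (simp add: ncconst_comm)
            also have "\<dots> = (Yg i * Poly_Mapping.single u 1 * Xg i) * C (Poly_Mapping.lookup b u)"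
              by (simp add: mult.assoc)
            also have "\<dots> = C (Poly_Mapping.lookup b u) * (Yg i * Poly_Mapping.single u 1 * Xg i)"
              by (simp add: ncconst_comm)
            finally show "Yg i * (C (Poly_Mapping.lookup b u) * Poly_Mapping.single u 1) * Xg i = C (Poly_Mapping.lookup b u) * (Yg i * Poly_Mapping.single u 1 * Xg i)" .
          qed
          finally show ?thesis .
        qed
        also have "\<dots> \<in> P"
        proof (rule ideal_sum[OF id])
          fix u assume "u \<in> Poly_Mapping.keys b"
          then have "\<forall>v\<in>set u. vidx v \<in> {1..n}" using b unfolding ncR_def by auto
          then show "C (Poly_Mapping.lookup b u) * (Yg i * Poly_Mapping.single u 1 * Xg i) \<in> P"
            using word id ideal_lmul ncR_const by blast
        qed
        finally show ?thesis .
      qed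
      define I where "I = {a \<in> ncR n. \<forall>b\<in>ncR n. a * b * Xg i \<in> P}"
      define J where "J = {c \<in> ncR n. \<forall>a\<in>I. a * c \<in> P}"
      have PI: "P \<subseteq> I"
      proof
        fix p assume p: "p \<in> P"
        have "\<forall>b\<in>ncR n. p * b * Xg i \<in> P"
        proof
          fix b assume "b \<in> ncR n"
          then have "p * b \<in> P" by (rule ideal_rmul[OF id _ p])
          then show "p * b * Xg i \<in> P" by (rule ideal_rmul[OF id gX])
        qed
        then show "p \<in> I" unfolding I_def using p sub by blast
      qed
      have IR: "I \<subseteq> ncR n" unfolding I_def by blast
      have PJ: "P \<subseteq> J"
      proof
        fix p assume p: "p \<in> P"
        have "\<forall>a\<in>I. a * p \<in> P"
        proof
          fix a assume "a \<in> I" then have "a \<in> ncR n" using IR by blast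
          then show "a * p \<in> P" by (rule ideal_lmul[OF id _ p])
        qed
        then show "p \<in> J" unfolding J_def using p sub by blast
      qed
      have negR: "- a \<in> ncR n" if "a \<in> ncR n" for a using that by (simp add: ncR_def keys_minus)
      have negP: "- a \<in> P" if "a \<in> P" for a using that id unfolding nc_ideal_def by blast
      have Iid: "nc_ideal n I"
        unfolding nc_ideal_def
      proof (intro conjI ballI)
        show "I \<subseteq> ncR n" by (rule IR)
        show "0 \<in> I" using PI ideal_zero[OF id] by blast
        fix a assume a: "a \<in> I"
        then have aR: "a \<in> ncR n" and aP: "\<And>b. b \<in> ncR n \<Longrightarrow> a * b * Xg i \<in> P" unfolding I_def by auto
        show "- a \<in> I" unfolding I_def using negR[OF aR] negP[OF aP] by simp
        { fix c assume "c \<in> I"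
          then have cR: "c \<in> ncR n" and cP: "\<And>b. b \<in> ncR n \<Longrightarrow> c * b * Xg i \<in> P" unfolding I_def by auto
          have "(a + c) * b * Xg i \<in> P" if "b \<in> ncR n" for b
            using ideal_add[OF id aP[OF that] cP[OF that]] by (simp add: distrib_left distrib_right)
          then show "a + c \<in> I" unfolding I_def using ncR_add[OF aR cR] by blast }
      next
        fix r a assume r: "r \<in> ncR n" and a: "a \<in> I"
        then have aR: "a \<in> ncR n" and aP: "\<And>b. b \<in> ncR n \<Longrightarrow> a * b * Xg i \<in> P" unfolding I_def by auto
        have "r * a * b * Xg i \<in> P" if "b \<in> ncR n" for b
          using ideal_lmul[OF id r aP[OF that]] by (simp add: mult.assoc)
        then show "fmul r a \<in> I" unfolding fmul_eq I_def using ncR_mult[OF r aR] by blast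
        have "a * r * b * Xg i \<in> P" if "b \<in> ncR n" for b
          using aP[OF ncR_mult[OF r that]] by (simp add: mult.assoc)
        then show "fmul a r \<in> I" unfolding fmul_eq I_def using ncR_mult[OF aR r] by blast
      qed
      have Jid: "nc_ideal n J"
        unfolding nc_ideal_def
      proof (intro conjI ballI)
        show "J \<subseteq> ncR n" unfolding J_def by blast
        show "0 \<in> J" using PJ ideal_zero[OF id] by blast
        fix a assume a: "a \<in> J"
        then have aR: "a \<in> ncR n" and aP: "\<And>b. b \<in> I \<Longrightarrow> b * a \<in> P" unfolding J_def by auto
        have "b * (- a) \<in> P" if "b \<in> I" for b using negP[OF aP[OF that]] by simp
        then show "- a \<in> J" unfolding J_def using negR[OF aR] by blast
        { fix c assume "c \<in> J"
          then have cR: "c \<in> ncR n" and cP: "\<And>b. b \<in> I \<Longrightarrow> b * c \<in> P" unfolding J_def by auto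
          have "b * (a + c) \<in> P" if "b \<in> I" for b
            using ideal_add[OF id aP[OF that] cP[OF that]] by (simp add: distrib_left)
          then show "a + c \<in> J" unfolding J_def using ncR_add[OF aR cR] by blast }
      next
        fix r a assume r: "r \<in> ncR n" and a: "a \<in> J"
        then have aR: "a \<in> ncR n" and aP: "\<And>b. b \<in> I \<Longrightarrow> b * a \<in> P" unfolding J_def by auto
        have bI: "b * r \<in> I" if "b \<in> I" for b using Iid that r unfolding nc_ideal_def fmul_eq by blast
        have "b * (r * a) \<in> P" if "b \<in> I" for b
          using aP[OF bI[OF that]] by (simp add: mult.assoc)
        then show "fmul r a \<in> J" unfolding fmul_eq J_def using ncR_mult[OF r aR] by blast
        have "b * (a * r) \<in> P" if "b \<in> I" for b
          using ideal_rmul[OF id r aP[OF that]] by (simp add: mult.assoc)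
        then show "fmul a r \<in> J" unfolding fmul_eq J_def using ncR_mult[OF aR r] by blast
      qed
      have RP: "Aq_rels n q lam \<subseteq> P" using P unfolding Aq_prime_def by blast
      have prod: "\<forall>a\<in>I. \<forall>b\<in>J. fmul a b \<in> P" unfolding J_def fmul_eq by blast
      have RI: "Aq_rels n q lam \<subseteq> I" using RP PI by blast
      have RJ: "Aq_rels n q lam \<subseteq> J" using RP PJ by blast
      have pr: "\<forall>I J. nc_ideal n I \<and> Aq_rels n q lam \<subseteq> I \<and> nc_ideal n J \<and> Aq_rels n q lam \<subseteq> J \<longrightarrow>
        (\<forall>a\<in>I. \<forall>b\<in>J. fmul a b \<in> P) \<longrightarrow> I \<subseteq> P \<or> J \<subseteq> P" using P unfolding Aq_prime_def by blast
      have "I \<subseteq> P \<or> J \<subseteq> P"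
        using pr[rule_format, of I J] Iid Jid RI RJ prod by blast
      moreover have "Yg i \<in> I" unfolding I_def using gY YbX by blast
      moreover have "Xg i \<in> J"
      proof -
        have "a * Xg i \<in> P" if "a \<in> I" for a
          using that ncR_one unfolding I_def by fastforce
        then show ?thesis unfolding J_def using gX by blast
      qed
      ultimately show "Yg i \<in> P \<or> Xg i \<in> P" by blast
    qed
  qed
  show ?thesis unfolding admissible_def nc_trace_def
  proof (intro conjI ballI)
    show "{m \<in> Mn n. ncelem m \<in> P} \<subseteq> Mn n" by blast
    fix i assume i: "i \<in> {2..n}"
    have "MY i \<in> Mn n" "MX i \<in> Mn n" "MZ i \<in> Mn n" "MZ (i - 1) \<in> Mn n"
      using i unfolding Mn_def by (auto simp: image_iff intro: bexI[of _ "i - 1"])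
    then show "(MY i \<in> {m \<in> Mn n. ncelem m \<in> P} \<or> MX i \<in> {m \<in> Mn n. ncelem m \<in> P}) =
         (MZ i \<in> {m \<in> Mn n. ncelem m \<in> P} \<and> MZ (i - 1) \<in> {m \<in> Mn n. ncelem m \<in> P})"
      using main[OF i] by simp
  qed
qed




abbreviation "ev v \<equiv> (Poly_Mapping.single v (1::nat))"

lemma pd_superset:
  assumes "finite S" "Poly_Mapping.keys f \<subseteq> S"
  shows "pd v f = (\<Sum>m\<in>S. Poly_Mapping.single (m - ev v) (Poly_Mapping.lookup f m * of_nat (Poly_Mapping.lookup m v)))"
  unfolding pd_def
  by (rule sum.mono_neutral_left[OF assms(1) assms(2)]) (auto simp: in_keys_iff)

lemma pd_add: "pd v (f + g) = pd v f + pd v g"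
proof -
  let ?S = "Poly_Mapping.keys f \<union> Poly_Mapping.keys g \<union> Poly_Mapping.keys (f + g)"
  have fin: "finite ?S" by simp
  show ?thesis
    apply (subst pd_superset[OF fin, of "f+g"], blast)
    apply (subst pd_superset[OF fin, of f], blast)
    apply (subst pd_superset[OF fin, of g], blast)
    by (simp add: lookup_add distrib_right single_add sum.distrib)
qed

lemma pd_zero: "pd v 0 = 0"
  by (simp add: pd_def)

lemma pd_sum: "pd v (sum f S) = (\<Sum>x\<in>S. pd v (f x))"
  by (induction S rule: infinite_finite_induct) (auto simp: pd_zero pd_add)

lemma pd_single: "pd v (Poly_Mapping.single m a) = Poly_Mapping.single (m - ev v) (a * of_nat (Poly_Mapping.lookup m v))"
  by (subst pd_superset[of "{m}"]) auto

lemma ev_shift: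
  assumes "Poly_Mapping.lookup m' v \<noteq> 0"
  shows "m + (m' - ev v) = (m + m') - ev v"
  by (rule poly_mapping_eqI) (use assms in \<open>auto simp: lookup_add lookup_minus lookup_single when_def\<close>)

lemma pd_mono_mult:
  "pd v (Poly_Mapping.single m a * Poly_Mapping.single m' b) =
     pd v (Poly_Mapping.single m a) * Poly_Mapping.single m' b + Poly_Mapping.single m a * pd v (Poly_Mapping.single m' b)"
proof -
  have A: "Poly_Mapping.single (m - ev v) (a * of_nat (Poly_Mapping.lookup m v)) * Poly_Mapping.single m' b
        = Poly_Mapping.single ((m + m') - ev v) (a * b * of_nat (Poly_Mapping.lookup m v))"
  proof (cases "Poly_Mapping.lookup m v = 0")
    case True then show ?thesis by simp
  next
    case False
    have "m - ev v + m' = (m + m') - ev v" using ev_shift[OF False, of m'] by (simp add: add.commute)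
    then show ?thesis by (simp add: mult_single ac_simps)
  qed
  have B: "Poly_Mapping.single m a * Poly_Mapping.single (m' - ev v) (b * of_nat (Poly_Mapping.lookup m' v))
        = Poly_Mapping.single ((m + m') - ev v) (a * b * of_nat (Poly_Mapping.lookup m' v))"
  proof (cases "Poly_Mapping.lookup m' v = 0")
    case True then show ?thesis by simp
  next
    case False
    show ?thesis using ev_shift[OF False, of m] by (simp add: mult_single ac_simps)
  qed
  have "pd v (Poly_Mapping.single m a * Poly_Mapping.single m' b)
     = Poly_Mapping.single ((m + m') - ev v) (a * b * of_nat (Poly_Mapping.lookup m v) + a * b * of_nat (Poly_Mapping.lookup m' v))"
    by (simp add: pd_single mult_single lookup_add distrib_left)
  also have "\<dots> = Poly_Mapping.single ((m + m') - ev v) (a * b * of_nat (Poly_Mapping.lookup m v)) + Poly_Mapping.single ((m + m') - ev v) (a * b * of_nat (Poly_Mapping.lookup m' v))"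
    by (rule single_add)
  also have "\<dots> = pd v (Poly_Mapping.single m a) * Poly_Mapping.single m' b + Poly_Mapping.single m a * pd v (Poly_Mapping.single m' b)"
    unfolding pd_single A B ..
  finally show ?thesis .
qed

lemma pd_mult: "pd v (f * g) = pd v f * g + f * pd v g"
proof -
  let ?sf = "\<lambda>u. Poly_Mapping.single u (Poly_Mapping.lookup f u)"
  let ?sg = "\<lambda>w. Poly_Mapping.single w (Poly_Mapping.lookup g w)"
  have f: "f = (\<Sum>u\<in>Poly_Mapping.keys f. ?sf u)" by (rule pm_sum_singles)
  have g: "g = (\<Sum>w\<in>Poly_Mapping.keys g. ?sg w)" by (rule pm_sum_singles)
  have "pd v (f * g) = pd v ((\<Sum>u\<in>Poly_Mapping.keys f. ?sf u) * (\<Sum>w\<in>Poly_Mapping.keys g. ?sg w))"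
    using f g by simp
  also have "\<dots> = (\<Sum>u\<in>Poly_Mapping.keys f. \<Sum>w\<in>Poly_Mapping.keys g. pd v (?sf u) * ?sg w + ?sf u * pd v (?sg w))"
    by (simp add: sum_distrib_left sum_distrib_right pd_sum pd_mono_mult sum.swap[of _ "Poly_Mapping.keys g"])
  also have "\<dots> = pd v (\<Sum>u\<in>Poly_Mapping.keys f. ?sf u) * (\<Sum>w\<in>Poly_Mapping.keys g. ?sg w) + (\<Sum>u\<in>Poly_Mapping.keys f. ?sf u) * pd v (\<Sum>w\<in>Poly_Mapping.keys g. ?sg w)"
    by (simp add: sum.distrib sum_distrib_left sum_distrib_right pd_sum sum.swap[of _ "Poly_Mapping.keys g"])
  finally show ?thesis using f g by simp
qed

lemma pd_neg: "pd v (- f) = - pd v f"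
  using pd_add[of v f "- f"] by (simp add: pd_zero eq_neg_iff_add_eq_0 add.commute)

lemma pd_cvar: "pd a (cvar v) = (if a = v then 1 else 0)"
  by (auto simp: cvar_def pd_single lookup_single)

lemma keys_sub_single: "Poly_Mapping.keys (m - ev v) \<subseteq> Poly_Mapping.keys m"
  by (auto simp: in_keys_iff lookup_minus)

lemma cR_mult: "f \<in> cR n \<Longrightarrow> g \<in> cR n \<Longrightarrow> f * g \<in> cR n"
proof -
  assume f: "f \<in> cR n" and g: "g \<in> cR n"
  show ?thesis unfolding cR_def
  proof (intro CollectI ballI)
    fix m v assume m: "m \<in> Poly_Mapping.keys (f * g)" and v: "v \<in> Poly_Mapping.keys m"
    from m keys_mult[of f g] obtain a b where "m = a + b" "a \<in> Poly_Mapping.keys f" "b \<in> Poly_Mapping.keys g"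
      by auto
    with v keys_add[of a b] f g show "vidx v \<in> {1..n}" unfolding cR_def by blast
  qed
qed

lemma cR_add: "f \<in> cR n \<Longrightarrow> g \<in> cR n \<Longrightarrow> f + g \<in> cR n"
  unfolding cR_def using keys_add[of f g] by blast

lemma cR_neg: "f \<in> cR n \<Longrightarrow> - f \<in> cR n"
  unfolding cR_def by simp

lemma cR_diff: "f \<in> cR n \<Longrightarrow> g \<in> cR n \<Longrightarrow> f - g \<in> cR n"
  using cR_add cR_neg by (metis diff_conv_add_uminus)

lemma cR_zero: "0 \<in> cR n"
  unfolding cR_def by simp

lemma cR_const: "cconst c \<in> cR n"
  unfolding cR_def cconst_def by simp

lemma cR_one: "1 \<in> cR n"
  unfolding cR_def by simp

lemma cR_var: "vidx v \<in> {1..n} \<Longrightarrow> cvar v \<in> cR n"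
  unfolding cR_def cvar_def by simp

lemma cR_sum: "(\<And>x. x \<in> S \<Longrightarrow> f x \<in> cR n) \<Longrightarrow> sum f S \<in> cR n"
  by (induction S rule: infinite_finite_induct) (auto intro: cR_zero cR_add)

lemma cR_pd: "f \<in> cR n \<Longrightarrow> pd v f \<in> cR n"
  unfolding pd_def
proof (rule cR_sum)
  fix m assume f: "f \<in> cR n" and m: "m \<in> Poly_Mapping.keys f"
  show "Poly_Mapping.single (m - ev v) (Poly_Mapping.lookup f m * of_nat (Poly_Mapping.lookup m v)) \<in> cR n"
    unfolding cR_def using f m keys_sub_single[of m v] unfolding cR_def by auto
qed

lemma cR_cz_sum: "i \<le> n \<Longrightarrow> (\<Sum>k\<in>{1..i}. cvar (Y k) * cvar (X k)) \<in> cR n"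
  by (rule cR_sum) (auto intro!: cR_mult cR_var)

lemma cR_cz_sum': "i \<le> n \<Longrightarrow> (\<Sum>k\<in>{Suc 0..i}. cvar (Y k) * cvar (X k)) \<in> cR n"
  using cR_cz_sum by simp

lemma cR_gb: "vidx a \<in> {1..n} \<Longrightarrow> vidx b \<in> {1..n} \<Longrightarrow> gb q lam d a b \<in> cR n"
  by (cases a; cases b) (auto intro!: cR_mult cR_var cR_const cR_neg cR_add cR_one cR_cz_sum cR_cz_sum' cR_zero)

lemma finite_Vars[simp]: "finite (Vars n)"
  unfolding Vars_def by simp

lemma Vars_idx: "a \<in> Vars n \<Longrightarrow> vidx a \<in> {1..n}"
  unfolding Vars_def by auto

lemma cR_pbr: "f \<in> cR n \<Longrightarrow> g \<in> cR n \<Longrightarrow> pbr n q lam d f g \<in> cR n"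
  unfolding pbr_def
  by (intro cR_sum cR_mult cR_pd cR_gb Vars_idx) auto

lemma pbr_add: "pbr n q lam d (f + g) h = pbr n q lam d f h + pbr n q lam d g h"
  unfolding pbr_def by (simp add: pd_add distrib_right sum.distrib)

lemma pbr_mult: "pbr n q lam d (f * g) h = f * pbr n q lam d g h + g * pbr n q lam d f h"
proof -
  have "pbr n q lam d (f * g) h = (\<Sum>a\<in>Vars n. \<Sum>b\<in>Vars n. f * (pd a g * pd b h * gb q lam d a b) + g * (pd a f * pd b h * gb q lam d a b))"
    unfolding pbr_def pd_mult by (intro sum.cong refl) (simp add: algebra_simps)
  also have "\<dots> = f * pbr n q lam d g h + g * pbr n q lam d f h"
    unfolding pbr_def by (simp add: sum.distrib sum_distrib_left)
  finally show ?thesis .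
qed

lemma pbr_var: "v \<in> Vars n \<Longrightarrow> pbr n q lam d (cvar v) h = (\<Sum>b\<in>Vars n. pd b h * gb q lam d v b)"
proof -
  assume v: "v \<in> Vars n"
  have "pbr n q lam d (cvar v) h = (\<Sum>a\<in>Vars n. if a = v then (\<Sum>b\<in>Vars n. pd b h * gb q lam d v b) else 0)"
    unfolding pbr_def by (intro sum.cong refl) (simp add: pd_cvar)
  also have "\<dots> = (\<Sum>b\<in>Vars n. pd b h * gb q lam d v b)"
    using v by (simp add: sum.delta')
  finally show ?thesis .
qed

lemma pbr_var_var: "v \<in> Vars n \<Longrightarrow> w \<in> Vars n \<Longrightarrow> pbr n q lam d (cvar v) (cvar w) = gb q lam d v w"
proof -
  assume v: "v \<in> Vars n" and w: "w \<in> Vars n"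
  have "pbr n q lam d (cvar v) (cvar w) = (\<Sum>b\<in>Vars n. if b = w then gb q lam d v b else 0)"
    unfolding pbr_var[OF v] by (intro sum.cong refl) (simp add: pd_cvar)
  also have "\<dots> = gb q lam d v w" using w by (simp add: sum.delta')
  finally show ?thesis .
qed




lemma cconst_mult: "cconst a * cconst b = cconst (a * b)"
  by (simp add: cconst_def mult_single)
lemma cconst_one: "cconst 1 = 1"
  by (simp add: cconst_def)

lemma cid:
  assumes "c_ideal n I"
  shows cid_sub: "I \<subseteq> cR n" and cid_zero: "0 \<in> I"
    and cid_add: "a \<in> I \<Longrightarrow> b \<in> I \<Longrightarrow> a + b \<in> I"
    and cid_neg: "a \<in> I \<Longrightarrow> - a \<in> I"
    and cid_mul: "r \<in> cR n \<Longrightarrow> a \<in> I \<Longrightarrow> r * a \<in> I"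
    and cid_mulr: "r \<in> cR n \<Longrightarrow> a \<in> I \<Longrightarrow> a * r \<in> I"
  using assms unfolding c_ideal_def by (auto simp: mult.commute)

lemma cid_diff: "c_ideal n I \<Longrightarrow> a \<in> I \<Longrightarrow> b \<in> I \<Longrightarrow> a - b \<in> I"
  by (metis cid_add cid_neg diff_conv_add_uminus)

lemma cid_sum: "c_ideal n I \<Longrightarrow> (\<And>x. x \<in> S \<Longrightarrow> f x \<in> I) \<Longrightarrow> sum f S \<in> I"
  by (induction S rule: infinite_finite_induct) (auto intro: cid_zero cid_add)

lemma K_cideal:
  assumes cP: "c_ideal n P" and v: "v \<in> Vars n"
    and K_def: "K = {p + cvar v * r | p r. p \<in> P \<and> r \<in> cR n}"
  shows "c_ideal n K" and "P \<subseteq> K" and "cvar v \<in> K"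
proof -
  have PR: "P \<subseteq> cR n" using cid_sub[OF cP] .
  have gR: "cvar v \<in> cR n" using v by (intro cR_var Vars_idx)
  have Kmem: "p \<in> P \<Longrightarrow> r \<in> cR n \<Longrightarrow> p + cvar v * r \<in> K" for p r unfolding K_def by blast
  show "P \<subseteq> K" using Kmem[of _ 0] cR_zero by auto
  show "cvar v \<in> K" using Kmem[OF cid_zero[OF cP] cR_one] by simp
  show cK: "c_ideal n K"
    unfolding c_ideal_def
  proof (intro conjI ballI)
    show "K \<subseteq> cR n" unfolding K_def using PR gR by (auto intro!: cR_add cR_mult)
    show "0 \<in> K" using Kmem[OF cid_zero[OF cP] cR_zero] by simp
    fix a assume "a \<in> K"
    then obtain p r where a: "a = p + cvar v * r" "p \<in> P" "r \<in> cR n" unfolding K_def by blast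
    show "- a \<in> K" using Kmem[OF cid_neg[OF cP a(2)] cR_neg[OF a(3)]] a(1) by (simp add: algebra_simps)
    { fix b assume "b \<in> K"
      then obtain p' r' where b: "b = p' + cvar v * r'" "p' \<in> P" "r' \<in> cR n" unfolding K_def by blast
      show "a + b \<in> K" using Kmem[OF cid_add[OF cP a(2) b(2)] cR_add[OF a(3) b(3)]] a(1) b(1)
        by (simp add: algebra_simps) }
  next
    fix s a assume s: "s \<in> cR n" and "a \<in> K"
    then obtain p r where a: "a = p + cvar v * r" "p \<in> P" "r \<in> cR n" unfolding K_def by blast
    show "s * a \<in> K" using Kmem[OF cid_mul[OF cP s a(2)] cR_mult[OF s a(3)]] a(1)
      by (simp add: algebra_simps)
  qed
qed

lemma K_helpers:
  assumes cK: "c_ideal n K" and g: "g \<in> K"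
  shows Kh1: "s \<in> cR n \<Longrightarrow> s * g \<in> K"
    and Kh2: "s \<in> cR n \<Longrightarrow> - (s * g) \<in> K"
    and Kh3: "s \<in> cR n \<Longrightarrow> t \<in> cR n \<Longrightarrow> s * g * t \<in> K"
    and Kh4: "s \<in> cR n \<Longrightarrow> t \<in> cR n \<Longrightarrow> - (s * g * t) \<in> K"
  using cid_mul[OF cK] cid_mulr[OF cK] cid_neg[OF cK] g by blast+

lemma K_poisson:
  assumes P: "poisson_ideal n q lam d P" and v: "v \<in> Vars n"
    and K_def: "K = {p + cvar v * r | p r. p \<in> P \<and> r \<in> cR n}"
    and hg: "\<forall>b\<in>Vars n. gb q lam d v b \<in> K"
  shows "poisson_ideal n q lam d K"
proof -
  have cP: "c_ideal n P" using P unfolding poisson_ideal_def by blast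
  have PR: "P \<subseteq> cR n" using cid_sub[OF cP] .
  have gR: "cvar v \<in> cR n" using v by (intro cR_var Vars_idx)
  have Kmem: "p \<in> P \<Longrightarrow> r \<in> cR n \<Longrightarrow> p + cvar v * r \<in> K" for p r unfolding K_def by blast
  have cK: "c_ideal n K"
    unfolding c_ideal_def
  proof (intro conjI ballI)
    show "K \<subseteq> cR n" unfolding K_def using PR gR by (auto intro!: cR_add cR_mult)
    show "0 \<in> K" using Kmem[OF cid_zero[OF cP] cR_zero] by simp
    fix a assume "a \<in> K"
    then obtain p r where a: "a = p + cvar v * r" "p \<in> P" "r \<in> cR n" unfolding K_def by blast
    show "- a \<in> K" using Kmem[OF cid_neg[OF cP a(2)] cR_neg[OF a(3)]] a(1) by (simp add: algebra_simps)
    { fix b assume "b \<in> K"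
      then obtain p' r' where b: "b = p' + cvar v * r'" "p' \<in> P" "r' \<in> cR n" unfolding K_def by blast
      show "a + b \<in> K" using Kmem[OF cid_add[OF cP a(2) b(2)] cR_add[OF a(3) b(3)]] a(1) b(1)
        by (simp add: algebra_simps) }
  next
    fix s a assume s: "s \<in> cR n" and "a \<in> K"
    then obtain p r where a: "a = p + cvar v * r" "p \<in> P" "r \<in> cR n" unfolding K_def by blast
    show "s * a \<in> K" using Kmem[OF cid_mul[OF cP s a(2)] cR_mult[OF s a(3)]] a(1)
      by (simp add: algebra_simps)
  qed
  have KR: "K \<subseteq> cR n" using cid_sub[OF cK] .
  have PK: "p \<in> P \<Longrightarrow> p \<in> K" for p using Kmem[of p 0] cR_zero by simp
  have gK: "r \<in> cR n \<Longrightarrow> cvar v * r \<in> K" for r using Kmem[OF cid_zero[OF cP]] by simp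
  show ?thesis unfolding poisson_ideal_def
  proof (intro conjI ballI cK)
    fix a f assume "a \<in> K" and f: "f \<in> cR n"
    then obtain p r where a: "a = p + cvar v * r" "p \<in> P" "r \<in> cR n" unfolding K_def by blast
    have e: "pbr n q lam d a f = pbr n q lam d p f + (cvar v * pbr n q lam d r f + r * pbr n q lam d (cvar v) f)"
      unfolding a(1) pbr_add pbr_mult ..
    have t1: "pbr n q lam d p f \<in> K" using P a(2) f unfolding poisson_ideal_def by (blast intro: PK)
    have t2: "cvar v * pbr n q lam d r f \<in> K" using gK cR_pbr[OF a(3) f] by blast
    have "pbr n q lam d (cvar v) f \<in> K"
      unfolding pbr_var[OF v]
      by (rule cid_sum[OF cK]) (use hg f cid_mul[OF cK] cR_pd in blast)
    then have t3: "r * pbr n q lam d (cvar v) f \<in> K" using cid_mul[OF cK a(3)] by blast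
    show "pbr n q lam d a f \<in> K" unfolding e using t1 t2 t3 cid_add[OF cK] by blast
  qed
qed

lemma cz_split: "i \<ge> 1 \<Longrightarrow> cz i = cz (i - 1) + cvar (Y i) * cvar (X i)"
proof -
  assume "i \<ge> 1"
  then have "{1..i} = insert i {1..i-1}" by auto
  then show ?thesis using \<open>i \<ge> 1\<close> unfolding cz_def by (simp add: add.assoc)
qed

lemma gb_YX: "gb q lam d (Y i) (X i) = - (cconst (d (q i)) * cz i)"
  by (simp add: cz_def)
lemma gb_XY: "gb q lam d (X i) (Y i) = cconst (d (q i)) * cz i"
  by (simp add: cz_def)

lemma p_part:
  assumes dq: "\<forall>i\<in>{1..n}. d (q i) \<noteq> 0"
    and PP: "poisson_prime n q lam d P"
  shows "admissible n (c_trace n P)"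
proof -
  have P: "poisson_ideal n q lam d P" using PP unfolding poisson_prime_def by blast
  have cP: "c_ideal n P" using P unfolding poisson_ideal_def by blast
  have PR: "P \<subseteq> cR n" using cid_sub[OF cP] .
  have main: "(cvar (Y i) \<in> P \<or> cvar (X i) \<in> P) \<longleftrightarrow> (cz i \<in> P \<and> cz (i - 1) \<in> P)" if i: "i \<in> {2..n}" for i
  proof -
    have i1: "1 \<le> i" "i \<le> n" using i by auto
    have vY: "Y i \<in> Vars n" and vX: "X i \<in> Vars n" using i1 unfolding Vars_def by auto
    have gY: "cvar (Y i) \<in> cR n" and gX: "cvar (X i) \<in> cR n" using i1 by (auto intro!: cR_var)
    have dqi: "d (q i) \<noteq> 0" using dq i1 by auto
    have zs: "cz i = cz (i - 1) + cvar (Y i) * cvar (X i)" using cz_split i1 by simp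
    have scale: "cz i \<in> P" if "cconst (d (q i)) * cz i \<in> P"
    proof -
      have "cconst (inverse (d (q i))) * (cconst (d (q i)) * cz i) \<in> P"
        using cid_mul[OF cP cR_const that] .
      moreover have "cconst (inverse (d (q i))) * (cconst (d (q i)) * cz i) = cz i"
        using dqi by (simp only: mult.assoc[symmetric] cconst_mult) (simp add: cconst_one)
      ultimately show ?thesis by simp
    qed
    show ?thesis
    proof
      assume h: "cvar (Y i) \<in> P \<or> cvar (X i) \<in> P"
      have yx: "cvar (Y i) * cvar (X i) \<in> P" using h cid_mul[OF cP] cid_mulr[OF cP] gX gY by blast
      have "cconst (d (q i)) * cz i \<in> P"
        using h
      proof
        assume "cvar (Y i) \<in> P"
        then have "pbr n q lam d (cvar (Y i)) (cvar (X i)) \<in> P" using P gX unfolding poisson_ideal_def by blast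
        then have "- (cconst (d (q i)) * cz i) \<in> P" by (simp only: pbr_var_var[OF vY vX] gb_YX)
        then show ?thesis using cid_neg[OF cP] by fastforce
      next
        assume "cvar (X i) \<in> P"
        then have "pbr n q lam d (cvar (X i)) (cvar (Y i)) \<in> P" using P gY unfolding poisson_ideal_def by blast
        then show ?thesis by (simp only: pbr_var_var[OF vX vY] gb_XY)
      qed
      then have zi: "cz i \<in> P" by (rule scale)
      have "cz i - cvar (Y i) * cvar (X i) \<in> P" using cid_diff[OF cP zi yx] .
      then show "cz i \<in> P \<and> cz (i - 1) \<in> P" using zi zs by simp
    next
      assume zz: "cz i \<in> P \<and> cz (i - 1) \<in> P"
      have yx: "cvar (Y i) * cvar (X i) \<in> P" using cid_diff[OF cP, of "cz i" "cz (i - 1)"] zz zs by simp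
      have dzP: "cconst (d (q i)) * cz i \<in> P" using cid_mul[OF cP cR_const] zz by blast
      define KY where "KY = {p + cvar (Y i) * r | p r. p \<in> P \<and> r \<in> cR n}"
      define KX where "KX = {p + cvar (X i) * r | p r. p \<in> P \<and> r \<in> cR n}"
      note KY = K_cideal[OF cP vY KY_def]
      note KX = K_cideal[OF cP vX KX_def]
      have hY: "\<forall>b\<in>Vars n. gb q lam d (Y i) b \<in> KY"
      proof
        fix b assume b: "b \<in> Vars n"
        then obtain j where j: "j \<in> {1..n}" "b = Y j \<or> b = X j" unfolding Vars_def by auto
        have gj: "cvar (Y j) \<in> cR n" "cvar (X j) \<in> cR n" using j by (auto intro!: cR_var)
        consider "j < i" | "i < j" | "j = i" by linarith
        then show "gb q lam d (Y i) b \<in> KY"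
        proof cases
          case 1 then show ?thesis using j gj
            by (auto intro!: Kh1[OF KY(1) KY(3)] Kh2[OF KY(1) KY(3)] Kh3[OF KY(1) KY(3)] Kh4[OF KY(1) KY(3)] cR_mult cR_const)
        next
          case 2 then show ?thesis using j gj
            by (auto intro!: Kh1[OF KY(1) KY(3)] Kh2[OF KY(1) KY(3)] Kh3[OF KY(1) KY(3)] Kh4[OF KY(1) KY(3)] cR_mult cR_const)
        next
          case 3 then show ?thesis using j gb_YX[of q lam d i] dzP KY(2) cid_neg[OF KY(1)] cid_zero[OF KY(1)]
            by auto
        qed
      qed
      have hX: "\<forall>b\<in>Vars n. gb q lam d (X i) b \<in> KX"
      proof
        fix b assume b: "b \<in> Vars n"
        then obtain j where j: "j \<in> {1..n}" "b = Y j \<or> b = X j" unfolding Vars_def by auto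
        have gj: "cvar (Y j) \<in> cR n" "cvar (X j) \<in> cR n" using j by (auto intro!: cR_var)
        consider "j < i" | "i < j" | "j = i" by linarith
        then show "gb q lam d (X i) b \<in> KX"
        proof cases
          case 1 then show ?thesis using j gj
            by (auto intro!: Kh1[OF KX(1) KX(3)] Kh2[OF KX(1) KX(3)] Kh3[OF KX(1) KX(3)] Kh4[OF KX(1) KX(3)] cR_mult cR_const)
        next
          case 2 then show ?thesis using j gj
            by (auto intro!: Kh1[OF KX(1) KX(3)] Kh2[OF KX(1) KX(3)] Kh3[OF KX(1) KX(3)] Kh4[OF KX(1) KX(3)] cR_mult cR_const)
        next
          case 3 then show ?thesis using j gb_XY[of q lam d i] dzP KX(2) cid_zero[OF KX(1)]
            by auto
        qed
      qed
      have PY: "poisson_ideal n q lam d KY" using K_poisson[OF P vY KY_def hY] .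
      have PX: "poisson_ideal n q lam d KX" using K_poisson[OF P vX KX_def hX] .
      have prod: "\<forall>a\<in>KY. \<forall>b\<in>KX. a * b \<in> P"
      proof (intro ballI)
        fix a b assume a: "a \<in> KY" and b: "b \<in> KX"
        obtain p r where pr: "a = p + cvar (Y i) * r" "p \<in> P" "r \<in> cR n" using a unfolding KY_def by blast
        obtain p' r' where pr': "b = p' + cvar (X i) * r'" "p' \<in> P" "r' \<in> cR n" using b unfolding KX_def by blast
        have bR: "b \<in> cR n" using b cid_sub[OF KX(1)] by blast
        have "a * b = p * b + (cvar (Y i) * r) * p' + (cvar (Y i) * cvar (X i)) * (r * r')"
          unfolding pr(1) pr'(1) by (simp add: algebra_simps)
        moreover have "p * b \<in> P" using cid_mulr[OF cP bR pr(2)] .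
        moreover have "(cvar (Y i) * r) * p' \<in> P" using cid_mul[OF cP cR_mult[OF gY pr(3)] pr'(2)] .
        moreover have "(cvar (Y i) * cvar (X i)) * (r * r') \<in> P" using cid_mulr[OF cP cR_mult[OF pr(3) pr'(3)] yx] .
        ultimately show "a * b \<in> P" using cid_add[OF cP] by metis
      qed
      have "KY \<subseteq> P \<or> KX \<subseteq> P" using PP PY PX prod unfolding poisson_prime_def by blast
      then show "cvar (Y i) \<in> P \<or> cvar (X i) \<in> P" using KY(3) KX(3) by blast
    qed
  qed
  show ?thesis unfolding admissible_def c_trace_def
  proof (intro conjI ballI)
    show "{m \<in> Mn n. celem m \<in> P} \<subseteq> Mn n" by blast
    fix i assume i: "i \<in> {2..n}"
    have "MY i \<in> Mn n" "MX i \<in> Mn n" "MZ i \<in> Mn n" "MZ (i - 1) \<in> Mn n"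
      using i unfolding Mn_def by (auto simp: image_iff intro: bexI[of _ "i - 1"])
    then show "(MY i \<in> {m \<in> Mn n. celem m \<in> P} \<or> MX i \<in> {m \<in> Mn n. celem m \<in> P}) =
         (MZ i \<in> {m \<in> Mn n. celem m \<in> P} \<and> MZ (i - 1) \<in> {m \<in> Mn n. celem m \<in> P})"
      using main[OF i] by simp
  qed
qed




lemma dq_nz:
  assumes q_ok: "\<forall>i\<in>{1..n}. q i \<noteq> 0 \<and> q i \<noteq> 1"
    and eta_basis: "\<forall>g\<in>GQL n q lam. \<exists>!s::nat \<Rightarrow> int. (\<forall>i\<ge>r. s i = 0) \<and> g = (\<Prod>i<r. eta i powi s i)"
    and mu_indep: "\<forall>c::nat \<Rightarrow> rat. (\<Sum>i<r. of_rat (c i) * mu i) = 0 \<longrightarrow> (\<forall>i<r. c i = 0)"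
    and d_def: "\<forall>s::nat \<Rightarrow> int. d (\<Prod>i<r. eta i powi s i) = (\<Sum>i<r. of_int (s i) * mu i)"
    and i: "i \<in> {1..n}"
  shows "d (q i) \<noteq> 0"
proof
  assume d0: "d (q i) = 0"
  have "q i \<in> GQL n q lam" unfolding GQL_def using i by (intro grp_gen.gen) blast
  then obtain s :: "nat \<Rightarrow> int" where s: "q i = (\<Prod>k<r. eta k powi s k)"
    using eta_basis by blast
  have "(\<Sum>k<r. of_rat (of_int (s k) :: rat) * mu k) = d (q i)"
    using d_def s by (simp add: of_rat_of_int_eq)
  then have "\<forall>k<r. (of_int (s k) :: rat) = 0" using mu_indep[rule_format, of "\<lambda>k. of_int (s k)"] d0 by simp
  then have "\<forall>k<r. s k = 0" by simp
  then have "q i = 1" using s by simp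
  then show False using q_ok i by blast
qed



theorem lemma2p14:
  fixes n r :: nat and q :: "nat \<Rightarrow> complex" and lam :: "nat \<Rightarrow> nat \<Rightarrow> complex"
    and eta mu :: "nat \<Rightarrow> complex" and d :: "complex \<Rightarrow> complex"
  assumes n1: "n \<ge> 1"
    and q_ok: "\<forall>i\<in>{1..n}. q i \<noteq> 0 \<and> q i \<noteq> 1"
    and lam_nz: "\<forall>i\<in>{1..n}. \<forall>j\<in>{1..n}. lam i j \<noteq> 0"
    and lam_diag: "\<forall>i\<in>{1..n}. lam i i = 1"
    and lam_inv: "\<forall>i\<in>{1..n}. \<forall>j\<in>{1..n}. lam i j = inverse (lam j i)"
    and torsion_free: "\<forall>g\<in>GQL n q lam. \<forall>k::nat. k > 0 \<longrightarrow> g ^ k = 1 \<longrightarrow> g = 1"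
    and eta_in: "\<forall>i<r. eta i \<in> GQL n q lam"
    and eta_basis: "\<forall>g\<in>GQL n q lam. \<exists>!s::nat \<Rightarrow> int. (\<forall>i\<ge>r. s i = 0) \<and> g = (\<Prod>i<r. eta i powi s i)"
    and mu_indep: "\<forall>c::nat \<Rightarrow> rat. (\<Sum>i<r. of_rat (c i) * mu i) = 0 \<longrightarrow> (\<forall>i<r. c i = 0)"
    and d_def: "\<forall>s::nat \<Rightarrow> int. d (\<Prod>i<r. eta i powi s i) = (\<Sum>i<r. of_int (s i) * mu i)"
  shows "(\<forall>P. Aq_prime n q lam P \<longrightarrow> admissible n (nc_trace n P))
       \<and> (\<forall>P. poisson_prime n q lam d P \<longrightarrow> admissible n (c_trace n P))"
proof (intro conjI allI impI)
  fix P assume "Aq_prime n q lam P"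
  then show "admissible n (nc_trace n P)" using nc_part q_ok lam_nz by blast
next
  fix P assume "poisson_prime n q lam d P"
  moreover have "\<forall>i\<in>{1..n}. d (q i) \<noteq> 0"
    using dq_nz[OF q_ok eta_basis mu_indep d_def] by blast
  ultimately show "admissible n (c_trace n P)" using p_part by blast
qed

end
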